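(* For positive integers $n$ and $d$, the $n^d$-grid has tree-width at least $\frac{2}{9d} \cdot n^{d-1}-1$.
   Context: The $n^d$-grid is the graph with vertex set $\{0,\dots,n-1\}^d$ in which two vertices $(x_1,\dots,x_d)$ and $(x_1',\dots,x_d')$ are adjacent if and only if $|x_1-x_1'|+\dots+|x_d-x_d'|=1$. *)

theory Defs
  imports Complex_Main
begin

type_synonym 'a graph = "'a set \<times> 'a set set"

definition adj :: "'a graph \<Rightarrow> 'a \<Rightarrow> 'a \<Rightarrow> bool" where
  "adj G x y \<longleftrightarrow> x \<noteq> y \<and> {x, y} \<in> snd G"

definition simple_graph :: "'a graph \<Rightarrow> bool" where
  "simple_graph G \<longleftrightarrow> finite (fst G) \<and>
     (\<forall>e \<in> snd G. \<exists>x y. x \<noteq> y \<and> x \<in> fst G \<and> y \<in> fst G \<and> e = {x, y})"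

definition path_in :: "'a graph \<Rightarrow> 'a set \<Rightarrow> 'a list \<Rightarrow> bool" where
  "path_in G S p \<longleftrightarrow> p \<noteq> [] \<and> set p \<subseteq> S \<and>
     (\<forall>i. Suc i < length p \<longrightarrow> adj G (p ! i) (p ! Suc i))"

definition connected_in :: "'a graph \<Rightarrow> 'a set \<Rightarrow> bool" where
  "connected_in G S \<longleftrightarrow> (\<forall>x\<in>S. \<forall>y\<in>S. \<exists>p. path_in G S p \<and> hd p = x \<and> last p = y)"

definition is_cycle :: "'a graph \<Rightarrow> 'a list \<Rightarrow> bool" where
  "is_cycle G c \<longleftrightarrow> length c \<ge> 3 \<and> distinct c \<and> path_in G (fst G) c \<and>
     adj G (last c) (hd c)"

definition is_tree :: "'a graph \<Rightarrow> bool" where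
  "is_tree T \<longleftrightarrow> simple_graph T \<and> fst T \<noteq> {} \<and> connected_in T (fst T) \<and>
     \<not> (\<exists>c. is_cycle T c)"

definition tree_decomposition :: "'a graph \<Rightarrow> nat graph \<Rightarrow> (nat \<Rightarrow> 'a set) \<Rightarrow> bool" where
  "tree_decomposition G T B \<longleftrightarrow>
     is_tree T \<and>
     (\<forall>t \<in> fst T. B t \<subseteq> fst G) \<and>
     (\<forall>v \<in> fst G. \<exists>t \<in> fst T. v \<in> B t) \<and>
     (\<forall>x y. adj G x y \<longrightarrow> (\<exists>t \<in> fst T. x \<in> B t \<and> y \<in> B t)) \<and>
     (\<forall>v \<in> fst G. connected_in T {t \<in> fst T. v \<in> B t})"

definition treewidth :: "'a graph \<Rightarrow> nat" where
  "treewidth G = (LEAST k. \<exists>T B. tree_decomposition G T B \<and>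
                     (\<forall>t \<in> fst T. card (B t) \<le> k + 1))"

definition grid_vertices :: "nat \<Rightarrow> nat \<Rightarrow> nat list set" where
  "grid_vertices n d = {x. length x = d \<and> (\<forall>i<d. x ! i < n)}"

definition grid :: "nat \<Rightarrow> nat \<Rightarrow> nat list graph" where
  "grid n d = (grid_vertices n d,
     {{x, y} | x y. x \<in> grid_vertices n d \<and> y \<in> grid_vertices n d \<and>
        (\<Sum>i<d. \<bar>int (x ! i) - int (y ! i)\<bar>) = 1})"

end

theory Submission
  imports Defs
begin


definition rch :: "'a graph \<Rightarrow> 'a set \<Rightarrow> 'a \<Rightarrow> 'a \<Rightarrow> bool" where
  "rch G S x y \<longleftrightarrow> x \<in> S \<and> (\<lambda>a b. a \<in> S \<and> b \<in> S \<and> adj G a b)\<^sup>*\<^sup>* x y"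

definition conn :: "'a graph \<Rightarrow> 'a set \<Rightarrow> bool" where
  "conn G S \<longleftrightarrow> (\<forall>x\<in>S. \<forall>y\<in>S. rch G S x y)"

lemma adj_sym: "adj G x y \<Longrightarrow> adj G y x"
  by (auto simp: adj_def insert_commute)

lemma adj_irrefl: "\<not> adj G x x"
  by (auto simp: adj_def)

lemma rch_refl: "x \<in> S \<Longrightarrow> rch G S x x"
  by (simp add: rch_def)

lemma rch_in: "rch G S x y \<Longrightarrow> y \<in> S"
  unfolding rch_def by (metis (no_types, lifting) rtranclp.cases)

lemma rch_step: assumes "rch G S x y" "z \<in> S" "adj G y z" shows "rch G S x z"
proof -
  have "y \<in> S" using rch_in[OF assms(1)] .
  then show ?thesis using assms unfolding rch_def by (auto intro: rtranclp.rtrancl_into_rtrancl)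
qed

lemma rch_trans: "rch G S x y \<Longrightarrow> rch G S y z \<Longrightarrow> rch G S x z"
  unfolding rch_def by auto

lemma rch_sym: "rch G S x y \<Longrightarrow> rch G S y x"
proof -
  assume a: "rch G S x y"
  have "(\<lambda>a b. a \<in> S \<and> b \<in> S \<and> adj G a b)\<^sup>*\<^sup>* x y" "x \<in> S" "y \<in> S"
    using a rch_in[OF a] by (auto simp: rch_def)
  then show ?thesis unfolding rch_def
  proof (induction rule: rtranclp_induct)
    case base then show ?case by simp
  next
    case (step y z)
    then have "(\<lambda>a b. a \<in> S \<and> b \<in> S \<and> adj G a b)\<^sup>*\<^sup>* z y"
      by (intro r_into_rtranclp) (auto simp: adj_sym)
    with step show ?case by (auto intro: rtranclp_trans)
  qed
qed

lemma rch_mono: "rch G S x y \<Longrightarrow> S \<subseteq> S' \<Longrightarrow> rch G S' x y"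
  unfolding rch_def
proof (elim conjE, intro conjI)
  assume "x \<in> S" "S \<subseteq> S'" then show "x \<in> S'" by auto
next
  assume "(\<lambda>a b. a \<in> S \<and> b \<in> S \<and> adj G a b)\<^sup>*\<^sup>* x y" "S \<subseteq> S'"
  then show "(\<lambda>a b. a \<in> S' \<and> b \<in> S' \<and> adj G a b)\<^sup>*\<^sup>* x y"
    by (induction rule: rtranclp_induct) (auto intro: rtranclp.rtrancl_into_rtrancl)
qed

lemma path_in_Cons:
  "path_in G S (a # p) \<longleftrightarrow> a \<in> S \<and> (p = [] \<or> (adj G a (hd p) \<and> path_in G S p))"
proof
  assume h: "path_in G S (a # p)"
  show "a \<in> S \<and> (p = [] \<or> (adj G a (hd p) \<and> path_in G S p))"
  proof (cases p)
    case Nil then show ?thesis using h by (auto simp: path_in_def)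
  next
    case (Cons b q)
    have all: "\<forall>i. Suc i < length (a#p) \<longrightarrow> adj G ((a#p)!i) ((a#p)!Suc i)" and sp: "set (a#p) \<subseteq> S"
      using h by (simp_all add: path_in_def)
    have "adj G ((a#p)!0) ((a#p)!Suc 0)" using all Cons by (erule_tac allE[of _ 0]) simp
    then have "adj G a b" using Cons by simp
    moreover have "path_in G S p" unfolding path_in_def
    proof (intro conjI allI impI)
      show "p \<noteq> []" using Cons by simp
      show "set p \<subseteq> S" using sp by simp
      fix i assume "Suc i < length p"
      then have "adj G ((a#p)!Suc i) ((a#p)!Suc (Suc i))" using all[rule_format, of "Suc i"] by simp
      then show "adj G (p ! i) (p ! Suc i)" by simp
    qed
    ultimately show ?thesis using h Cons by (auto simp: path_in_def)
  qed
next
  assume h: "a \<in> S \<and> (p = [] \<or> (adj G a (hd p) \<and> path_in G S p))"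
  show "path_in G S (a # p)"
  proof (cases p)
    case Nil then show ?thesis using h by (auto simp: path_in_def)
  next
    case (Cons b q)
    show ?thesis unfolding path_in_def
    proof (intro conjI allI impI)
      show "a # p \<noteq> []" by simp
      show "set (a # p) \<subseteq> S" using h Cons by (auto simp: path_in_def)
      fix i assume i: "Suc i < length (a # p)"
      show "adj G ((a # p) ! i) ((a # p) ! Suc i)"
      proof (cases i)
        case 0 then show ?thesis using h Cons by auto
      next
        case (Suc j) then show ?thesis using h Cons i by (auto simp: path_in_def)
      qed
    qed
  qed
qed

lemma path_rch: "path_in G S p \<Longrightarrow> rch G S (hd p) (last p)"
proof (induction p)
  case Nil then show ?case by (simp add: path_in_def)
next
  case (Cons a p)
  show ?case
  proof (cases p)
    case Nil then show ?thesis using Cons.prems by (simp add: path_in_Cons rch_refl)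
  next
    case (Cons b q)
    note Cons2 = this
    have "rch G S b (last p)" using Cons.IH Cons.prems Cons2 by (simp add: path_in_Cons)
    moreover have "a \<in> S" "b \<in> S" "adj G a b" using Cons.prems Cons2 by (auto simp: path_in_Cons path_in_def)
    ultimately show ?thesis using Cons2 unfolding rch_def
      by (auto intro: converse_rtranclp_into_rtranclp)
  qed
qed

lemma rch_path: "rch G S x y \<Longrightarrow> \<exists>p. path_in G S p \<and> hd p = x \<and> last p = y"
  unfolding rch_def
proof (elim conjE)
  assume "(\<lambda>a b. a \<in> S \<and> b \<in> S \<and> adj G a b)\<^sup>*\<^sup>* x y" "x \<in> S"
  then show ?thesis
  proof (induction rule: converse_rtranclp_induct)
    case base then show ?case by (intro exI[of _ "[y]"]) (auto simp: path_in_def)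
  next
    case (step a b)
    then obtain p where "path_in G S p" "hd p = b" "last p = y" by auto
    moreover have "p \<noteq> []" using \<open>path_in G S p\<close> by (simp add: path_in_def)
    ultimately show ?case using step
      by (intro exI[of _ "a # p"]) (simp add: path_in_Cons)
  qed
qed

lemma connected_conn: "connected_in G S \<longleftrightarrow> conn G S"
  unfolding connected_in_def conn_def using path_rch rch_path by metis



lemma path_in_take: "path_in G S p \<Longrightarrow> 0 < k \<Longrightarrow> path_in G S (take k p)"
  unfolding path_in_def by (auto dest: in_set_takeD)

lemma path_in_mono: "path_in G S p \<Longrightarrow> S \<subseteq> S' \<Longrightarrow> path_in G S' p"
  unfolding path_in_def by auto

lemma leaf_exists:
  assumes acyc: "\<not>(\<exists>c. is_cycle T c)" and fin: "finite N" and sub: "N \<subseteq> fst T"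
    and cn: "conn T N" and two: "x \<in> N" "y \<in> N" "x \<noteq> y"
  shows "\<exists>l\<in>N. \<exists>p\<in>N. adj T l p \<and> (\<forall>q\<in>N. adj T l q \<longrightarrow> q = p)"
proof -
  define P where "P q \<longleftrightarrow> path_in T N q \<and> distinct q \<and> length q \<ge> 2" for q
  have "(\<lambda>a b. a \<in> N \<and> b \<in> N \<and> adj T a b)\<^sup>*\<^sup>* x y"
    using cn two unfolding conn_def rch_def by auto
  then have "\<exists>z. z \<in> N \<and> adj T x z" using two(3)
    by (induction rule: converse_rtranclp_induct) auto
  then obtain z where z: "z \<in> N" "adj T x z" by blast
  have "P [x, z]" unfolding P_def using z two adj_irrefl[of T x]
    by (auto simp: path_in_Cons)
  moreover have "\<forall>q. P q \<longrightarrow> length q < card N + 1"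
  proof (intro allI impI)
    fix q assume "P q"
    then have "set q \<subseteq> N" "distinct q" by (auto simp: P_def path_in_def)
    have "card (set q) \<le> card N" using card_mono[OF fin \<open>set q \<subseteq> N\<close>] .
    moreover have "card (set q) = length q" using distinct_card[OF \<open>distinct q\<close>] .
    ultimately show "length q < card N + 1" by linarith
  qed
  ultimately obtain q where q: "P q" and qmax: "\<forall>r. P r \<longrightarrow> length r \<le> length q"
    using ex_has_greatest_nat[of P "[x,z]" length "card N + 1"] by blast
  have qp: "path_in T N q" "distinct q" "length q \<ge> 2" using q by (auto simp: P_def)
  define v where "v = q ! 0"
  define u where "u = q ! 1"
  have vu: "adj T v u" using qp unfolding v_def u_def path_in_def by auto
  have "set q \<subseteq> N" using qp by (simp add: path_in_def)
  moreover have "q ! 0 \<in> set q" "q ! 1 \<in> set q" using qp by (auto intro!: nth_mem)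
  ultimately have vN: "v \<in> N" "u \<in> N" unfolding v_def u_def by auto
  have hdq: "hd q = v" using qp unfolding v_def by (cases q) auto
  have "\<forall>w\<in>N. adj T v w \<longrightarrow> w = u"
  proof (intro ballI impI)
    fix w assume wN: "w \<in> N" and vw: "adj T v w"
    show "w = u"
    proof (cases "w \<in> set q")
      case False
      have "P (w # q)" unfolding P_def using qp False wN vw hdq
        by (auto simp: path_in_Cons adj_sym)
      from qmax[rule_format, OF this] show ?thesis by simp
    next
      case True
      then obtain j where j: "j < length q" "q ! j = w" by (auto simp: in_set_conv_nth)
      have "j \<noteq> 0"
      proof
        assume "j = 0"
        then have "w = v" using j v_def by simp
        then show False using vw adj_irrefl by metis
      qed
      show ?thesis
      proof (cases "j = 1")
        case True then show ?thesis using j u_def by simp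
      next
        case False
        define c where "c = take (Suc j) q"
        have "is_cycle T c" unfolding is_cycle_def
        proof (intro conjI)
          show "3 \<le> length c" using \<open>j \<noteq> 0\<close> False j unfolding c_def by auto
          show "distinct c" using qp unfolding c_def by simp
          show "path_in T (fst T) c" unfolding c_def
            using path_in_mono[OF path_in_take[OF qp(1)] sub] by simp
          have lc: "length c = Suc j" unfolding c_def using j by simp
          have cne: "c \<noteq> []" using lc by auto
          have "last c = c ! j" using last_conv_nth[OF cne] lc by simp
          also have "\<dots> = w" unfolding c_def using j by simp
          finally have "last c = w" .
          moreover have "hd c = c ! 0" using hd_conv_nth[OF cne] .
          then have "hd c = v" unfolding c_def v_def by simp
          ultimately show "adj T (last c) (hd c)" using vw adj_sym by metis
        qed
        then show ?thesis using acyc by blast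
      qed
    qed
  qed
  then show ?thesis using vN vu by blast
qed

lemma leaf_remove:
  assumes "rch T A x y" "x \<noteq> l" "\<forall>q\<in>A. adj T l q \<longrightarrow> q = p"
  shows "(y \<noteq> l \<longrightarrow> rch T (A - {l}) x y) \<and> (y = l \<longrightarrow> rch T (A - {l}) x p)"
proof -
  have "(\<lambda>a b. a \<in> A \<and> b \<in> A \<and> adj T a b)\<^sup>*\<^sup>* x y" "x \<in> A"
    using assms(1) by (auto simp: rch_def)
  then show ?thesis
  proof (induction rule: rtranclp_induct)
    case base then show ?case using assms(2) by (simp add: rch_refl)
  next
    case (step y z)
    show ?case
    proof (cases "y = l")
      case True
      then have "z \<noteq> l" using step adj_irrefl by metis
      moreover have "z = p" using True step assms(3) by auto
      ultimately show ?thesis using step True by auto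
    next
      case False
      then have ry: "rch T (A - {l}) x y" using step by auto
      show ?thesis
      proof (cases "z = l")
        case True
        then have "y = p" using step assms(3) adj_sym by metis
        then show ?thesis using ry True by auto
      next
        case False
        then show ?thesis using ry step by (auto intro: rch_step)
      qed
    qed
  qed
qed

lemma conn_remove_leaf:
  assumes "conn T A" "\<forall>q\<in>A. adj T l q \<longrightarrow> q = p"
  shows "conn T (A - {l})"
  unfolding conn_def
proof (intro ballI)
  fix x y assume "x \<in> A - {l}" "y \<in> A - {l}"
  then show "rch T (A - {l}) x y" using leaf_remove[of T A x y l p] assms
    unfolding conn_def by auto
qed

lemma no_helly_family:
  assumes acyc: "\<not>(\<exists>c. is_cycle T c)"
  shows "finite N \<Longrightarrow> N \<subseteq> fst T \<Longrightarrow> N \<noteq> {} \<Longrightarrow> conn T N \<Longrightarrow>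
    \<forall>t\<in>N. S t \<subseteq> N \<and> conn T (S t) \<and> t \<notin> S t \<Longrightarrow>
    \<forall>t\<in>N. \<forall>s\<in>N. S t \<inter> S s \<noteq> {} \<Longrightarrow> False"
proof (induction "card N" arbitrary: N S rule: less_induct)
  case less
  have fin: "finite N" and sub: "N \<subseteq> fst T" and ne: "N \<noteq> {}" and cn: "conn T N"
    using less.prems(1-4) .
  have Ssub: "S t \<subseteq> N" and Scn: "conn T (S t)" and Snot: "t \<notin> S t" if "t \<in> N" for t
    using less.prems(5) that by blast+
  have Si: "S t \<inter> S s \<noteq> {}" if "t \<in> N" "s \<in> N" for t s
    using less.prems(6) that by blast
  show False
  proof (cases "\<exists>x\<in>N. \<exists>y\<in>N. x \<noteq> y")
    case False
    then obtain t where tN: "t \<in> N" "N = {t}" using ne by blast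
    then have "S t \<subseteq> {}" using Ssub[OF tN(1)] Snot[OF tN(1)] by blast
    then show False using Si[OF tN(1) tN(1)] by blast
  next
    case True
    then obtain x y where xy: "x \<in> N" "y \<in> N" "x \<noteq> y" by blast
    obtain l p where lp: "l \<in> N" "p \<in> N" "adj T l p" and lq: "\<And>q. q \<in> N \<Longrightarrow> adj T l q \<Longrightarrow> q = p"
      using leaf_exists[OF acyc fin sub cn xy] by blast
    have pl: "p \<noteq> l"
    proof
      assume "p = l" then show False using lp(3) adj_irrefl by metis
    qed
    define N' where "N' = N - {l}"
    define S' where "S' t = S t - {l}" for t
    have lt: "card N' < card N" unfolding N'_def using card_Diff1_less[OF fin lp(1)] .
    have leafS: "\<forall>r\<in>S t. adj T l r \<longrightarrow> r = p" if "t \<in> N" for t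
      using lq Ssub[OF that] by blast
    have key: "p \<in> S t" if "t \<in> N" "l \<in> S t" "q \<in> S t" "q \<noteq> l" for t q
    proof -
      have "rch T (S t) q l" using Scn[OF that(1)] that(2,3) unfolding conn_def by blast
      then have "(l \<noteq> l \<longrightarrow> rch T (S t - {l}) q l) \<and> (l = l \<longrightarrow> rch T (S t - {l}) q p)"
        using leaf_remove[of T "S t" q l l p] that(4) leafS[OF that(1)] by blast
      then have "rch T (S t - {l}) q p" by simp
      then have "p \<in> S t - {l}" by (rule rch_in)
      then show ?thesis by simp
    qed
    show False
    proof (rule less.hyps[OF lt, of S'])
      show "finite N'" using fin unfolding N'_def by simp
      show "N' \<subseteq> fst T" using sub unfolding N'_def by blast
      show "N' \<noteq> {}" using lp(2) pl unfolding N'_def by blast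
      show "conn T N'" unfolding N'_def using conn_remove_leaf[OF cn] lq by blast
      show "\<forall>t\<in>N'. S' t \<subseteq> N' \<and> conn T (S' t) \<and> t \<notin> S' t"
      proof
        fix t assume t': "t \<in> N'"
        then have t: "t \<in> N" unfolding N'_def by simp
        have "conn T (S' t)" unfolding S'_def using conn_remove_leaf[OF Scn[OF t] leafS[OF t]] .
        moreover have "S' t \<subseteq> N'" using Ssub[OF t] unfolding S'_def N'_def by blast
        moreover have "t \<notin> S' t" using Snot[OF t] unfolding S'_def by blast
        ultimately show "S' t \<subseteq> N' \<and> conn T (S' t) \<and> t \<notin> S' t" by blast
      qed
      show "\<forall>t\<in>N'. \<forall>s\<in>N'. S' t \<inter> S' s \<noteq> {}"
      proof (intro ballI)
        fix t s assume t': "t \<in> N'" and s': "s \<in> N'"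
        then have t: "t \<in> N" and s: "s \<in> N" unfolding N'_def by simp_all
        show "S' t \<inter> S' s \<noteq> {}"
        proof (cases "S t \<inter> S s \<subseteq> {l}")
          case False then show ?thesis unfolding S'_def by blast
        next
          case True
          then have lts: "l \<in> S t" "l \<in> S s" using Si[OF t s] by blast+
          have "S l \<inter> S t \<noteq> {}" "S l \<inter> S s \<noteq> {}" using Si lp(1) t s by blast+
          moreover have "l \<notin> S l" using Snot[OF lp(1)] .
          ultimately obtain q1 q2 where "q1 \<in> S t" "q1 \<noteq> l" "q2 \<in> S s" "q2 \<noteq> l" by blast
          then have "p \<in> S t" "p \<in> S s" using key[OF t lts(1)] key[OF s lts(2)] by blast+
          then show ?thesis using pl unfolding S'_def by blast
        qed
      qed
    qed
  qed
qed



lemma td_part1: "tree_decomposition G T B \<Longrightarrow> is_tree T"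
  unfolding tree_decomposition_def by (elim conjE) assumption

lemma td_part2: "tree_decomposition G T B \<Longrightarrow> \<forall>t \<in> fst T. B t \<subseteq> fst G"
  unfolding tree_decomposition_def by (elim conjE) assumption

lemma td_part3: "tree_decomposition G T B \<Longrightarrow> \<forall>v \<in> fst G. \<exists>t \<in> fst T. v \<in> B t"
  unfolding tree_decomposition_def by (elim conjE) assumption

lemma td_part4: "tree_decomposition G T B \<Longrightarrow> \<forall>x y. adj G x y \<longrightarrow> (\<exists>t \<in> fst T. x \<in> B t \<and> y \<in> B t)"
  unfolding tree_decomposition_def by (elim conjE) assumption

lemma td_part5: "tree_decomposition G T B \<Longrightarrow> \<forall>v \<in> fst G. connected_in T {t \<in> fst T. v \<in> B t}"
  unfolding tree_decomposition_def by (elim conjE) assumption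

lemma td_conn:
  assumes "tree_decomposition G T B" "v \<in> fst G"
  shows "conn T {t \<in> fst T. v \<in> B t}"
proof -
  have "connected_in T {t \<in> fst T. v \<in> B t}" using td_part5[OF assms(1)] assms(2) by blast
  then show ?thesis using connected_conn by blast
qed

lemma conn_S:
  assumes td: "tree_decomposition G T B" and Y: "Y \<subseteq> fst G" and u: "u \<in> Y"
  shows "conn T {s\<in>fst T. B s \<inter> {w. rch G Y u w} \<noteq> {}}"
proof -
  define S where "S = {s\<in>fst T. B s \<inter> {w. rch G Y u w} \<noteq> {}}"
  have cov: "\<And>v. v \<in> fst G \<Longrightarrow> \<exists>t\<in>fst T. v \<in> B t" using td_part3[OF td] by blast
  have edge: "\<And>x y. adj G x y \<Longrightarrow> \<exists>t\<in>fst T. x \<in> B t \<and> y \<in> B t"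
    using td_part4[OF td] by blast
  obtain s0 where s0: "s0 \<in> fst T" "u \<in> B s0" using cov[of u] u Y by blast
  have sub: "{t \<in> fst T. v \<in> B t} \<subseteq> S" if "rch G Y u v" for v
  proof (rule subsetI)
    fix t assume "t \<in> {t \<in> fst T. v \<in> B t}"
    then have "t \<in> fst T" "v \<in> B t" by simp_all
    then have "t \<in> fst T" "v \<in> B t \<inter> {w. rch G Y u w}" using that by simp_all
    then show "t \<in> S" unfolding S_def by auto
  qed
  have local: "rch T S r s" if "rch G Y u v" "v \<in> fst G" "r \<in> fst T" "v \<in> B r" "s \<in> fst T" "v \<in> B s" for v r s
  proof -
    have c: "conn T {t \<in> fst T. v \<in> B t}" by (rule td_conn[OF td that(2)])
    have rin: "r \<in> {t \<in> fst T. v \<in> B t}" and sin: "s \<in> {t \<in> fst T. v \<in> B t}" using that(3-6) by simp_all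
    have "rch T {t \<in> fst T. v \<in> B t} r s" using c[unfolded conn_def, rule_format, OF rin sin] .
    from rch_mono[OF this sub[OF that(1)]] show ?thesis .
  qed
  have main: "\<forall>s\<in>fst T. w \<in> B s \<longrightarrow> rch T S s0 s" if "rch G Y u w" for w
  proof -
    have "(\<lambda>a b. a \<in> Y \<and> b \<in> Y \<and> adj G a b)\<^sup>*\<^sup>* u w" using that by (simp add: rch_def)
    then show ?thesis
    proof (induction rule: rtranclp_induct)
      case base
      show ?case
      proof (intro ballI impI)
        fix s assume "s \<in> fst T" "u \<in> B s"
        then show "rch T S s0 s" using local[OF rch_refl[OF u] _ s0] u Y by blast
      qed
    next
      case (step y z)
      have yz: "y \<in> Y" "z \<in> Y" "adj G y z" using step(2) by simp_all
      obtain r where r: "r \<in> fst T" "y \<in> B r" "z \<in> B r" using edge[OF yz(3)] by blast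
      have r0: "rch T S s0 r" using step(3) r by blast
      have rz: "rch G Y u z" using step(1) step(2) u unfolding rch_def
        by (simp add: rtranclp.rtrancl_into_rtrancl)
      show ?case
      proof (intro ballI impI)
        fix s assume "s \<in> fst T" "z \<in> B s"
        then have "rch T S r s" using local[OF rz _ r(1) r(3)] yz(2) Y by blast
        then show "rch T S s0 s" using r0 rch_trans by metis
      qed
    qed
  qed
  have "conn T S" unfolding conn_def
  proof (intro ballI)
    fix s1 s2 assume "s1 \<in> S" "s2 \<in> S"
    then obtain w1 w2 where "s1 \<in> fst T" "w1 \<in> B s1" "rch G Y u w1"
      "s2 \<in> fst T" "w2 \<in> B s2" "rch G Y u w2" unfolding S_def by blast
    then have "rch T S s0 s1" "rch T S s0 s2" using main by blast+
    then show "rch T S s1 s2" using rch_sym rch_trans by metis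
  qed
  then show ?thesis unfolding S_def .
qed

lemma no_big_everywhere:
  assumes td: "tree_decomposition G T B" and fin: "finite (fst G)"
    and big: "\<forall>t\<in>fst T. \<exists>u. card (fst G) < 2 * card {w. rch G (fst G - B t) u w}"
  shows False
proof -
  obtain U where U: "\<forall>t\<in>fst T. card (fst G) < 2 * card {w. rch G (fst G - B t) (U t) w}"
    using bchoice[OF big] by blast
  define C where "C t = {w. rch G (fst G - B t) (U t) w}" for t
  define S where "S t = {s\<in>fst T. B s \<inter> C t \<noteq> {}}" for t
  have CV: "C t \<subseteq> fst G - B t" for t unfolding C_def using rch_in by fastforce
  have Ut: "U t \<in> fst G - B t" if "t \<in> fst T" for t
  proof -
    have "C t \<noteq> {}" using U that unfolding C_def by (metis card.empty mult_0_right not_less0)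
    then show ?thesis unfolding C_def rch_def by auto
  qed
  have tree: "is_tree T" using td by (simp add: tree_decomposition_def)
  show False
  proof (rule no_helly_family[of T "fst T" S])
    show "\<not> (\<exists>c. is_cycle T c)" "finite (fst T)" "fst T \<subseteq> fst T" "fst T \<noteq> {}" "conn T (fst T)"
      using tree by (auto simp: is_tree_def simple_graph_def connected_conn)
    show "\<forall>t\<in>fst T. S t \<subseteq> fst T \<and> conn T (S t) \<and> t \<notin> S t"
    proof
      fix t assume t: "t \<in> fst T"
      have "conn T (S t)" unfolding S_def C_def using conn_S[OF td _ Ut[OF t]] by blast
      moreover have "t \<notin> S t" unfolding S_def using CV by blast
      ultimately show "S t \<subseteq> fst T \<and> conn T (S t) \<and> t \<notin> S t" unfolding S_def by auto
    qed
    show "\<forall>t\<in>fst T. \<forall>s\<in>fst T. S t \<inter> S s \<noteq> {}"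
    proof (intro ballI)
      fix t s assume t: "t \<in> fst T" and s: "s \<in> fst T"
      have "C t \<inter> C s \<noteq> {}"
      proof
        assume dis: "C t \<inter> C s = {}"
        have "C t \<union> C s \<subseteq> fst G" using CV by blast
        then have "card (C t) + card (C s) \<le> card (fst G)"
          using card_Un_disjoint[OF finite_subset[OF _ fin] finite_subset[OF _ fin] dis] CV fin
          by (metis card_mono le_sup_iff)
        moreover have "card (fst G) < 2 * card (C t)" "card (fst G) < 2 * card (C s)"
          using U t s unfolding C_def by auto
        ultimately show False by linarith
      qed
      then obtain v where v: "v \<in> C t" "v \<in> C s" by blast
      then obtain r where "r \<in> fst T" "v \<in> B r" using td CV unfolding tree_decomposition_def by blast
      then have "r \<in> S t \<inter> S s" unfolding S_def using v by blast
      then show "S t \<inter> S s \<noteq> {}" by blast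
    qed
  qed
qed



lemma gv_eq: "grid_vertices n d = {xs. set xs \<subseteq> {..<n} \<and> length xs = d}"
  unfolding grid_vertices_def by (auto simp: subset_iff in_set_conv_nth)

lemma gv_mem: "pre @ j # suf \<in> grid_vertices n d \<longleftrightarrow>
   set pre \<subseteq> {..<n} \<and> set suf \<subseteq> {..<n} \<and> j < n \<and> length pre + length suf + 1 = d"
  unfolding gv_eq by auto

lemma grid_adj:
  assumes x: "pre @ j # suf \<in> grid_vertices n d" and y: "pre @ Suc j # suf \<in> grid_vertices n d"
  shows "adj (grid n d) (pre @ j # suf) (pre @ Suc j # suf)"
proof -
  let ?x = "pre @ j # suf" and ?y = "pre @ Suc j # suf"
  have t: "\<bar>int (?x ! i) - int (?y ! i)\<bar> = (if i = length pre then 1 else 0)" for i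
    by (cases "i < length pre") (auto simp: nth_append nth_Cons' split: if_splits)
  have lt: "length pre < d" using x by (auto simp: gv_mem)
  have "(\<Sum>i<d. \<bar>int (?x ! i) - int (?y ! i)\<bar>) = 1"
    unfolding t using lt by (simp add: sum.delta)
  then have "{?x, ?y} \<in> snd (grid n d)" unfolding grid_def using x y by auto
  then show ?thesis unfolding adj_def by simp
qed

lemma line_rch:
  assumes free: "\<forall>j<n. pre @ j # suf \<notin> X" and len: "length pre + length suf + 1 = d"
    and sp: "set pre \<subseteq> {..<n}" and ss: "set suf \<subseteq> {..<n}" and a: "a < n" and b: "b < n"
  shows "rch (grid n d) (grid_vertices n d - X) (pre @ a # suf) (pre @ b # suf)"
proof -
  have inY: "pre @ j # suf \<in> grid_vertices n d - X" if "j < n" for j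
    using that free len sp ss by (simp add: gv_mem)
  have up: "rch (grid n d) (grid_vertices n d - X) (pre @ a # suf) (pre @ (a + m) # suf)"
    if "a + m < n" for a m using that
  proof (induction m)
    case 0 then show ?case using inY by (simp add: rch_refl)
  next
    case (Suc m)
    then have "rch (grid n d) (grid_vertices n d - X) (pre @ a # suf) (pre @ (a + m) # suf)" by simp
    moreover have "adj (grid n d) (pre @ (a + m) # suf) (pre @ Suc (a + m) # suf)"
      using grid_adj inY Suc.prems by (metis DiffD1 Suc_lessD add_Suc_right)
    ultimately show ?case using rch_step inY Suc.prems by (metis add_Suc_right)
  qed
  show ?thesis
  proof (cases "a \<le> b")
    case True then show ?thesis using up[of a "b - a"] b by simp
  next
    case False then show ?thesis using up[of b "a - b"] a rch_sym by (metis le_add_diff_inverse nat_le_linear)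
  qed
qed

lemma good_rch:
  assumes u: "u \<in> grid_vertices n d" and w: "w \<in> grid_vertices n d"
    and good: "\<forall>k<d. \<forall>j<n. take k w @ j # drop (Suc k) u \<notin> X" and d: "d \<ge> 1"
  shows "rch (grid n d) (grid_vertices n d - X) u w"
proof -
  have lu: "length u = d" "set u \<subseteq> {..<n}" and lw: "length w = d" "set w \<subseteq> {..<n}"
    using u w by (auto simp: gv_eq)
  have step: "rch (grid n d) (grid_vertices n d - X) u (take k w @ drop k u)" if "k \<le> d" for k
    using that
  proof (induction k)
    case 0
    have e: "take 0 w @ u ! 0 # drop (Suc 0) u = u" using lu d by (simp add: Cons_nth_drop_Suc)
    have "u ! 0 \<in> set u" using lu d by (intro nth_mem) simp
    then have "u ! 0 < n" using lu(2) by blast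
    then have "take 0 w @ u ! 0 # drop (Suc 0) u \<notin> X" using good[rule_format, of 0 "u ! 0"] d by simp
    then have "u \<notin> X" using e by simp
    then have "rch (grid n d) (grid_vertices n d - X) u u" using u by (simp add: rch_refl)
    then show ?case by simp
  next
    case (Suc k)
    then have IH: "rch (grid n d) (grid_vertices n d - X) u (take k w @ drop k u)" by simp
    have k: "k < d" using Suc by simp
    have e1: "take k w @ drop k u = take k w @ u ! k # drop (Suc k) u"
      using k lu by (simp add: Cons_nth_drop_Suc)
    have e2: "take (Suc k) w @ drop (Suc k) u = take k w @ w ! k # drop (Suc k) u"
      using k lw by (simp add: take_Suc_conv_app_nth)
    have "rch (grid n d) (grid_vertices n d - X) (take k w @ u ! k # drop (Suc k) u) (take k w @ w ! k # drop (Suc k) u)"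
    proof (rule line_rch)
      show "\<forall>j<n. take k w @ j # drop (Suc k) u \<notin> X" using good k by blast
      show "length (take k w) + length (drop (Suc k) u) + 1 = d" using k lu lw by simp
      show "set (take k w) \<subseteq> {..<n}" using lw by (meson in_set_takeD subset_iff)
      show "set (drop (Suc k) u) \<subseteq> {..<n}" using lu by (meson in_set_dropD subset_iff)
      show "u ! k < n" "w ! k < n" using lu lw k by (auto simp: subset_iff)
    qed
    then show ?case using IH e1 e2 rch_trans by metis
  qed
  show ?thesis using step[of d] lu lw by simp
qed



lemma card_L: "card {xs. set xs \<subseteq> {..<n} \<and> length xs = m} = n ^ m"
  using card_lists_length_eq[of "{..<n}" m] by simp

lemma fin_L: "finite {xs. set xs \<subseteq> {..<(n::nat)} \<and> length xs = m}"
  using finite_lists_length_eq[of "{..<n}" m] by simp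

lemma grid_big_comp:
  assumes n: "n \<ge> 1" and d: "d \<ge> 1" and XV: "X \<subseteq> grid_vertices n d"
    and small: "2 * d * card X < n ^ (d - 1)"
  shows "\<exists>u. card (grid_vertices n d) < 2 * card {w. rch (grid n d) (grid_vertices n d - X) u w}"
proof (rule ccontr)
  assume "\<not> ?thesis"
  then have hyp: "\<forall>u. 2 * card {w. rch (grid n d) (grid_vertices n d - X) u w} \<le> card (grid_vertices n d)"
    by (simp add: not_less)
  define V where "V = grid_vertices n d"
  define L where "L m = {xs. set xs \<subseteq> {..<n} \<and> length xs = m}" for m
  define C where "C u = {w. rch (grid n d) (V - X) u w}" for u
  define N where "N = card V"
  have finV: "finite V" unfolding V_def gv_eq using fin_L by simp
  have NV: "N = n ^ d" unfolding N_def V_def gv_eq using card_L by simp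
  have CV: "C u \<subseteq> V" for u unfolding C_def using rch_in by fastforce
  have finX: "finite X" using XV finV V_def finite_subset by blast
  define Good where "Good = (SIGMA u:V. C u)"
  define Bad where "Bad = V \<times> V - Good"
  have GoodV: "Good \<subseteq> V \<times> V" unfolding Good_def using CV by auto
  have cG: "card Good = (\<Sum>u\<in>V. card (C u))" unfolding Good_def
  proof (rule card_SigmaI)
    show "finite V" by (rule finV)
    show "\<forall>a\<in>V. finite (C a)" using finite_subset[OF CV finV] by blast
  qed
  have "2 * card Good = (\<Sum>u\<in>V. 2 * card (C u))" unfolding cG by (simp add: sum_distrib_left)
  also have "\<dots> \<le> (\<Sum>u\<in>V. N)" using hyp unfolding C_def N_def V_def by (intro sum_mono) auto
  also have "\<dots> = N * N" unfolding N_def by simp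
  finally have G2: "2 * card Good \<le> N * N" .
  have cB: "card Bad = N * N - card Good" unfolding Bad_def N_def
    using GoodV finV by (simp add: card_Diff_subset card_cartesian_product finite_subset)
  define Tgt where "Tgt = (SIGMA k:{..<d}. X \<times> (L (Suc k) \<times> L (d - k)))"
  define psi where "psi = (\<lambda>(k::nat, z::nat list, a::nat list, b::nat list). (a @ drop (Suc k) z, take k z @ b))"
  have BadT: "Bad \<subseteq> psi ` Tgt"
  proof
    fix p assume p: "p \<in> Bad"
    obtain u w where uw: "p = (u, w)" by (cases p)
    have u: "u \<in> V" and w: "w \<in> V" and nr: "\<not> rch (grid n d) (V - X) u w"
      using p uw unfolding Bad_def Good_def C_def by auto
    then obtain k j where kj: "k < d" "j < n" "take k w @ j # drop (Suc k) u \<in> X"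
      using good_rch[of u n d w X] d unfolding V_def by blast
    define z where "z = take k w @ j # drop (Suc k) u"
    have lu: "length u = d" "set u \<subseteq> {..<n}" and lw: "length w = d" "set w \<subseteq> {..<n}"
      using u w by (auto simp: gv_eq V_def)
    have z1: "drop (Suc k) z = drop (Suc k) u" unfolding z_def using kj lw by simp
    have z2: "take k z = take k w" unfolding z_def using kj lw by simp
    have "(k, z, take (Suc k) u, drop k w) \<in> Tgt" unfolding Tgt_def L_def z_def
      using kj lu lw by (auto dest: in_set_takeD in_set_dropD)
    moreover have "psi (k, z, take (Suc k) u, drop k w) = p" unfolding psi_def uw
      using z1 z2 by simp
    ultimately show "p \<in> psi ` Tgt" by force
  qed
  have cT: "card Tgt = d * card X * n ^ (d + 1)"
  proof -
    have "card Tgt = (\<Sum>k<d. card X * (n ^ Suc k * n ^ (d - k)))" unfolding Tgt_def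
      using finX fin_L by (subst card_SigmaI) (auto simp: L_def card_cartesian_product card_L)
    also have "\<dots> = (\<Sum>k<d. card X * n ^ (d + 1))"
    proof (rule sum.cong)
      fix k assume "k \<in> {..<d}"
      then have "Suc k + (d - k) = d + 1" by auto
      then show "card X * (n ^ Suc k * n ^ (d - k)) = card X * n ^ (d + 1)"
        by (metis power_add)
    qed simp
    finally show ?thesis by simp
  qed
  have finT: "finite Tgt" unfolding Tgt_def using finX fin_L by (auto simp: L_def)
  have "card Bad \<le> card Tgt" using card_mono[OF finite_imageI[OF finT] BadT] card_image_le[OF finT, of psi]
    by linarith
  then have "N * N \<le> 2 * d * card X * n ^ (d + 1)" using cB G2 cT by linarith
  moreover have "N * N = n ^ (d - 1) * n ^ (d + 1)" unfolding NV using d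
    by (metis add.commute le_add_diff_inverse2 power_add add_Suc_right plus_1_eq_Suc add_Suc mult_2)
  ultimately have "n ^ (d - 1) * n ^ (d + 1) \<le> (2 * d * card X) * n ^ (d + 1)" by simp
  then have "n ^ (d - 1) \<le> 2 * d * card X" using n by simp
  then show False using small by simp
qed



lemma single_tree: "is_tree ({0::nat}, {})"
proof -
  have "\<not> is_cycle ({0::nat}, {}) c" for c
  proof
    assume c: "is_cycle ({0::nat}, {}) c"
    then have "set c \<subseteq> {0}" "distinct c" "length c \<ge> 3" by (auto simp: is_cycle_def path_in_def)
    then show False using distinct_card card_mono[of "{0::nat}" "set c"] by fastforce
  qed
  moreover have "connected_in ({0::nat}, {}) {0}"
    unfolding connected_conn conn_def by (auto intro: rch_refl)
  ultimately show ?thesis unfolding is_tree_def simple_graph_def by auto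
qed

lemma grid_adj_in: "adj (grid n d) x y \<Longrightarrow> x \<in> grid_vertices n d \<and> y \<in> grid_vertices n d"
  unfolding adj_def grid_def by (auto simp: doubleton_eq_iff)

theorem lemma13:
  fixes n d :: nat
  assumes "n \<ge> 1" and "d \<ge> 1"
  shows "real (treewidth (grid n d)) \<ge> 2 / (9 * real d) * real n ^ (d - 1) - 1"
proof -
  define G where "G = grid n d"
  define V where "V = grid_vertices n d"
  have fV: "fst G = V" unfolding G_def V_def grid_def by simp
  have finV: "finite V" unfolding V_def gv_eq using fin_L by simp
  have ex: "\<exists>T B. tree_decomposition G T B \<and> (\<forall>t \<in> fst T. card (B t) \<le> card V + 1)"
  proof (intro exI conjI)
    show "tree_decomposition G ({0::nat}, {}) (\<lambda>_. V)"
      unfolding tree_decomposition_def fV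
    proof (intro conjI)
      show "is_tree ({0::nat}, {})" by (rule single_tree)
      show "\<forall>x y. adj G x y \<longrightarrow> (\<exists>t\<in>fst ({0::nat}, {}). x \<in> V \<and> y \<in> V)"
        using grid_adj_in unfolding G_def V_def by auto
      show "\<forall>v\<in>V. connected_in ({0::nat}, {}) {t \<in> fst ({0::nat}, {}). v \<in> V}"
        unfolding connected_conn conn_def by (auto intro: rch_refl)
    qed auto
    show "\<forall>t\<in>fst ({0::nat}, {}). card V \<le> card V + 1" by simp
  qed
  define tw where "tw = treewidth G"
  obtain T B where td: "tree_decomposition G T B" and bags: "\<forall>t \<in> fst T. card (B t) \<le> tw + 1"
  proof -
    have ex': "\<exists>k. \<exists>T B. tree_decomposition G T B \<and> (\<forall>t \<in> fst T. card (B t) \<le> k + 1)"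
      using ex by blast
    have "\<exists>T B. tree_decomposition G T B \<and> (\<forall>t \<in> fst T. card (B t) \<le> tw + 1)"
      unfolding tw_def treewidth_def by (rule LeastI_ex[OF ex'])
    then show ?thesis using that by blast
  qed
  have key: "n ^ (d - 1) \<le> 2 * d * (tw + 1)"
  proof (rule ccontr)
    assume "\<not> ?thesis"
    then have sm: "2 * d * (tw + 1) < n ^ (d - 1)" by simp
    show False
    proof (rule no_big_everywhere[OF td])
      show "finite (fst G)" using fV finV by simp
      show "\<forall>t\<in>fst T. \<exists>u. card (fst G) < 2 * card {w. rch G (fst G - B t) u w}"
      proof
        fix t assume t: "t \<in> fst T"
        have BV: "B t \<subseteq> V" using td t fV unfolding tree_decomposition_def by auto
        have "card (B t) \<le> tw + 1" using bags t by blast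
        then have "2 * d * card (B t) \<le> 2 * d * (tw + 1)" by (rule mult_le_mono2)
        then have "2 * d * card (B t) < n ^ (d - 1)" using sm by linarith
        then show "\<exists>u. card (fst G) < 2 * card {w. rch G (fst G - B t) u w}"
          using grid_big_comp[OF assms BV[unfolded V_def]] fV unfolding G_def V_def by simp
      qed
    qed
  qed
  have dpos: "real d > 0" using assms by simp
  have k: "real n ^ (d - 1) \<le> 2 * real d * (real tw + 1)"
    using key by (metis (mono_tags) of_nat_le_iff of_nat_mult of_nat_power of_nat_numeral of_nat_add of_nat_1)
  have "2 / (9 * real d) * real n ^ (d - 1) \<le> 2 / (9 * real d) * (2 * real d * (real tw + 1))"
    using k dpos by (intro mult_left_mono) auto
  also have "\<dots> = 4 / 9 * (real tw + 1)" using dpos by (simp add: field_simps)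
  also have "\<dots> \<le> real tw + 1" by simp
  finally show ?thesis unfolding tw_def G_def by simp
qed

end
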